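(* Under Assumption 1 (unique best action), consider the FP-UCB algorithm run for a horizon of $T\ge |A|$ steps on the finitely parameterized bandit with true parameter $\theta^o$. Then there exist constants $D_1, D_2$, depending only on $|A|$ and on the means $(\mu_i(\theta))_{i\in[L],\theta\in\Theta}$ (and not on $T$), such that $$\mathbb{E}[R(T)] \le D_1 \quad\text{if } B(\theta^o)=\varnothing,$$ and $$\mathbb{E}[R(T)] \le D_2 + 12\log(T)\sum_{i\in C(\theta^o)} \frac{\Delta_i}{\beta_i^2}\quad\text{if } B(\theta^o)\neq\varnothing.$$
   Context: Setting: there are $L$ arms $[L]=\{1,\dots,L\}$ and a known finite parameter set $\Theta$. For each $\theta\in\Theta$ and arm $i$, $P_i(\cdot;\theta)$ is a known probability distribution supported on $[0,1]$ with known mean $\mu_i(\theta)$. An unknown true parameter $\theta^o\in\Theta$ governs the rewards: the reward $X_i(\tau)$ from the $\tau$-th pull of arm $i$ is drawn from $P_i(\cdot;\theta^o)$; rewards of a given arm are i.i.d. and independent across arms. At each time $t=1,\dots,T$ the agent picks an arm $a(t)$ based on past observations. Let $a^*(\theta)=\arg\max_{i\in[L]}\mu_i(\theta)$. Assumption 1: for every $\theta\in\Theta$ the maximizer $a^*(\theta)$ is unique. Regret: $R(T)=\sum_{t=1}^T(\mu_{a^*(\theta^o)}(\theta^o)-\mu_{a(t)}(\theta^o))$. Logarithms are natural. Notation: $n_i(t)=\sum_{\tau=1}^t \mathbb{1}\{a(\tau)=i\}$; $\hat\mu_i(t)=\frac{1}{n_i(t)}\sum_{\tau=1}^{n_i(t)}X_i(\tau)$;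 $A=\{a^*(\theta):\theta\in\Theta\}$; $\Delta_i=\mu_{a^*(\theta^o)}(\theta^o)-\mu_i(\theta^o)$; $B(\theta^o)=\{\theta\in\Theta: a^*(\theta)\ne a^*(\theta^o)\text{ and } \mu_{a^*(\theta^o)}(\theta^o)=\mu_{a^*(\theta^o)}(\theta)\}$; $C(\theta^o)=\{a^*(\theta):\theta\in B(\theta^o)\}$; for $i\in C(\theta^o)$, $\beta_i=\min_{\theta\in B(\theta^o),\,a^*(\theta)=i}|\mu_i(\theta^o)-\mu_i(\theta)|$. FP-UCB algorithm: at times $t=1,\dots,|A|$ select each arm of $A$ once. Then set episode counter $k=1$, $t=|A|+1$, and while $t\le T$: let $t_k=t-1$ and compute $A_k=\{a^*(\theta):\theta\in\Theta,\ \forall i\in A,\ |\hat\mu_i(t_k)-\mu_i(\theta)|\le\sqrt{3\log(k)/n_i(t_k)}\}$; if $A_k\ne\varnothing$, select each arm of $A_k$ once (over the next $|A_k|$ time steps, $t\leftarrow t+|A_k|$), otherwise select each arm of $A$ once ($t\leftarrow t+|A|$); then $k\leftarrow k+1$. (Pulls beyond time $T$ are discarded.) *)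

theory Defs
  imports "HOL-Probability.Probability"
begin

text \<open>Arms are the natural numbers 1..L; parameters have an arbitrary type 'p.
  mu i th is the (known) mean of arm i under parameter th.\<close>

definition opt_arm :: "nat \<Rightarrow> (nat \<Rightarrow> 'p \<Rightarrow> real) \<Rightarrow> 'p \<Rightarrow> nat" where
  "opt_arm L mu th = (THE i. i \<in> {1..L} \<and> (\<forall>j\<in>{1..L}. mu j th \<le> mu i th))"

definition opt_set :: "nat \<Rightarrow> (nat \<Rightarrow> 'p \<Rightarrow> real) \<Rightarrow> 'p set \<Rightarrow> nat set" where
  "opt_set L mu Th = opt_arm L mu ` Th"

text \<open>Number of pulls of arm i in a history h (list of arms played, in order).\<close>
definition pulls :: "nat \<Rightarrow> nat list \<Rightarrow> nat" where
  "pulls i h = length (filter (\<lambda>a. a = i) h)"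

text \<open>Empirical mean of arm i after history h; X (i, tau) is the reward of the tau-th pull of arm i.\<close>
definition emp_mean :: "(nat \<times> nat \<Rightarrow> real) \<Rightarrow> nat \<Rightarrow> nat list \<Rightarrow> real" where
  "emp_mean X i h = (\<Sum>tau = 1..pulls i h. X (i, tau)) / real (pulls i h)"

definition conf_set :: "nat \<Rightarrow> (nat \<Rightarrow> 'p \<Rightarrow> real) \<Rightarrow> 'p set \<Rightarrow> (nat \<times> nat \<Rightarrow> real)
    \<Rightarrow> nat \<Rightarrow> nat list \<Rightarrow> nat set" where
  "conf_set L mu Th X k h =
     opt_arm L mu ` {th \<in> Th. \<forall>i\<in>opt_set L mu Th.
        \<bar>emp_mean X i h - mu i th\<bar> \<le> sqrt (3 * ln (real k) / real (pulls i h))}"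

text \<open>History of FP-UCB after the initialisation phase (index 0) and episodes 1..k.
  Within an episode, the arms of the set are played in increasing order.\<close>
primrec fp_hist :: "nat \<Rightarrow> (nat \<Rightarrow> 'p \<Rightarrow> real) \<Rightarrow> 'p set \<Rightarrow> (nat \<times> nat \<Rightarrow> real)
    \<Rightarrow> nat \<Rightarrow> nat list" where
  "fp_hist L mu Th X 0 = sorted_list_of_set (opt_set L mu Th)"
| "fp_hist L mu Th X (Suc k) =
     (let h = fp_hist L mu Th X k; Ak = conf_set L mu Th X (Suc k) h
      in h @ sorted_list_of_set (if Ak \<noteq> {} then Ak else opt_set L mu Th))"

text \<open>Arm played at time t (1-based) when run with horizon T; since every episode plays at
  least one arm, fp_hist ... T has length > T, and pulls beyond T are discarded.\<close>
definition fp_action :: "nat \<Rightarrow> (nat \<Rightarrow> 'p \<Rightarrow> real) \<Rightarrow> 'p set \<Rightarrow> (nat \<times> nat \<Rightarrow> real)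
    \<Rightarrow> nat \<Rightarrow> nat \<Rightarrow> nat" where
  "fp_action L mu Th X T t = fp_hist L mu Th X T ! (t - 1)"

definition fp_regret :: "nat \<Rightarrow> (nat \<Rightarrow> 'p \<Rightarrow> real) \<Rightarrow> 'p set \<Rightarrow> 'p \<Rightarrow> (nat \<times> nat \<Rightarrow> real)
    \<Rightarrow> nat \<Rightarrow> real" where
  "fp_regret L mu Th tho X T =
     (\<Sum>t = 1..T. mu (opt_arm L mu tho) tho - mu (fp_action L mu Th X T t) tho)"

text \<open>Probability space of reward tables: X (i, tau) ~ P i tho, all independent.\<close>
definition bandit_space :: "nat \<Rightarrow> (nat \<Rightarrow> 'p \<Rightarrow> real measure) \<Rightarrow> 'p \<Rightarrow> (nat \<times> nat \<Rightarrow> real) measure" where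
  "bandit_space L P tho = (\<Pi>\<^sub>M ia \<in> {1..L} \<times> {1::nat..}. P (fst ia) tho)"

definition gap :: "nat \<Rightarrow> (nat \<Rightarrow> 'p \<Rightarrow> real) \<Rightarrow> 'p \<Rightarrow> nat \<Rightarrow> real" where
  "gap L mu tho i = mu (opt_arm L mu tho) tho - mu i tho"

definition B_set :: "nat \<Rightarrow> (nat \<Rightarrow> 'p \<Rightarrow> real) \<Rightarrow> 'p set \<Rightarrow> 'p \<Rightarrow> 'p set" where
  "B_set L mu Th tho = {th \<in> Th. opt_arm L mu th \<noteq> opt_arm L mu tho \<and>
       mu (opt_arm L mu tho) tho = mu (opt_arm L mu tho) th}"

definition C_set :: "nat \<Rightarrow> (nat \<Rightarrow> 'p \<Rightarrow> real) \<Rightarrow> 'p set \<Rightarrow> 'p \<Rightarrow> nat set" where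
  "C_set L mu Th tho = opt_arm L mu ` B_set L mu Th tho"

definition beta :: "nat \<Rightarrow> (nat \<Rightarrow> 'p \<Rightarrow> real) \<Rightarrow> 'p set \<Rightarrow> 'p \<Rightarrow> nat \<Rightarrow> real" where
  "beta L mu Th tho i = Min ((\<lambda>th. \<bar>mu i tho - mu i th\<bar>) ` {th \<in> B_set L mu Th tho. opt_arm L mu th = i})"

end

theory Submission
  imports Defs
begin


lemma count_le:
  fixes n :: "nat \<Rightarrow> nat" and P :: "nat \<Rightarrow> bool" and c :: real
  assumes step: "\<And>k. n (Suc k) = n k + (if P k then 1 else 0)" and n0: "n 0 \<ge> 1" and c: "c \<ge> 0"
  shows "(\<Sum>k<N. if P k \<and> real (n k) \<le> c then 1 else 0) \<le> c"
proof -
  have mono: "n 0 \<le> n N" for N by (induction N) (auto simp: step)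
  have inv: "(\<Sum>k<N. if P k \<and> real (n k) \<le> c then 1 else 0) + real (n 0) \<le> max (real (n 0)) (min (real (n N)) (c+1))" for N
  proof (induction N)
    case 0 then show ?case by simp
  next
    case (Suc N)
    have le: "(\<Sum>k<N. if P k \<and> real (n k) \<le> c then 1 else 0) + real (n 0) \<le> real (n N)"
      using Suc mono[of N] by linarith
    show ?case
    proof (cases "P N \<and> real (n N) \<le> c")
      case True
      then have "n (Suc N) = n N + 1" by (simp add: step)
      then show ?thesis using True le mono[of N] by simp
    next
      case False
      then have "n (Suc N) \<ge> n N" by (simp add: step)
      then have mm: "max (real (n 0)) (min (real (n N)) (c+1)) \<le> max (real (n 0)) (min (real (n (Suc N))) (c+1))"
        by simp
      have e: "(\<Sum>k<Suc N. if P k \<and> real (n k) \<le> c then 1 else 0) = (\<Sum>k<N. if P k \<and> real (n k) \<le> c then 1 else 0)"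
        using False by auto
      show ?thesis unfolding e using order_trans[OF Suc.IH mm] .
    qed
  qed
  show ?thesis using inv[of N] n0 c by linarith
qed

lemma count_le2:
  fixes R :: real assumes "R \<ge> 0"
  shows "(\<Sum>k<N. if real (Suc k) \<le> R then 1 else 0) \<le> R"
proof -
  have "(\<Sum>k<N. if real (Suc k) \<le> R then 1 else 0) \<le> min (real N) R" for N
  proof (induction N)
    case 0 then show ?case using assms by simp
  next
    case (Suc N) then show ?case by auto
  qed
  then show ?thesis by (meson min.bounded_iff)
qed

lemma ln_lin:
  fixes c x :: real assumes "c > 0" "x > 0"
  shows "c * ln x \<le> x/2 + c * ln (2*c)"
proof -
  have "ln (x/(2*c)) \<le> x/(2*c) - 1" using assms by (intro ln_le_minus_one) auto
  moreover have "ln (x/(2*c)) = ln x - ln (2*c)" using assms by (simp add: ln_div)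
  ultimately have "ln x \<le> x/(2*c) + ln (2*c)" by simp
  then have "c * ln x \<le> c * (x/(2*c) + ln (2*c))" using assms by (intro mult_left_mono) auto
  also have "\<dots> = x/2 + c * ln (2*c)" using assms by (simp add: field_simps)
  finally show ?thesis .
qed

lemma nbound:
  fixes d d' n l :: real
  assumes "0 < d'" "d' \<le> d" "d \<le> 2 * sqrt(3*l/n)" "0 < n" "0 \<le> l"
  shows "n \<le> 12*l/d'^2"
proof -
  have "d'^2 \<le> d^2" using assms by (intro power_mono) auto
  also have "\<dots> \<le> (2 * sqrt(3*l/n))^2" using assms by (intro power_mono) auto
  also have "\<dots> = 12*l/n" using assms by (simp add: power_mult_distrib)
  finally have "d'^2 \<le> 12*l/n" .
  then have "d'^2 * n \<le> 12*l" using assms by (simp add: field_simps)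
  then show ?thesis using assms by (simp add: field_simps)
qed

lemma pulls_append: "pulls i (xs @ ys) = pulls i xs + pulls i ys" by (simp add: pulls_def)

lemma pulls_sorted: "finite S \<Longrightarrow> pulls i (sorted_list_of_set S) = (if i \<in> S then 1 else 0)"
proof -
  assume f: "finite S"
  have "pulls i (sorted_list_of_set S) = card ({x. x = i} \<inter> S)"
    using f by (simp add: pulls_def distinct_length_filter)
  also have "\<dots> = (if i \<in> S then 1 else 0)" by auto
  finally show ?thesis .
qed

locale fpb =
  fixes L :: nat and Th :: "'p set" and mu :: "nat \<Rightarrow> 'p \<Rightarrow> real" and tho :: 'p
  assumes L1: "1 \<le> L" and finTh: "finite Th" and tho: "tho \<in> Th"
    and uniq: "\<forall>th\<in>Th. \<exists>i\<in>{1..L}. \<forall>j\<in>{1..L}. j \<noteq> i \<longrightarrow> mu j th < mu i th"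
begin

abbreviation "opt \<equiv> opt_arm L mu"
abbreviation "A \<equiv> opt_set L mu Th"
abbreviation "astar \<equiv> opt_arm L mu tho"
abbreviation "gp \<equiv> gap L mu tho"

lemma opt_prop:
  assumes "th \<in> Th"
  shows "opt th \<in> {1..L}" "\<And>j. j \<in> {1..L} \<Longrightarrow> j \<noteq> opt th \<Longrightarrow> mu j th < mu (opt th) th"
proof -
  obtain i where i: "i \<in> {1..L}" "\<forall>j\<in>{1..L}. j \<noteq> i \<longrightarrow> mu j th < mu i th" using uniq assms by blast
  have "opt th = i" unfolding opt_arm_def
  proof (rule the_equality)
    show "i \<in> {1..L} \<and> (\<forall>j\<in>{1..L}. mu j th \<le> mu i th)" using i by force
    fix i' assume h: "i' \<in> {1..L} \<and> (\<forall>j\<in>{1..L}. mu j th \<le> mu i' th)"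
    show "i' = i"
    proof (rule ccontr)
      assume "i' \<noteq> i"
      then have "mu i' th < mu i th" using i h by auto
      moreover have "mu i th \<le> mu i' th" using h i by auto
      ultimately show False by simp
    qed
  qed
  then show "opt th \<in> {1..L}" "\<And>j. j \<in> {1..L} \<Longrightarrow> j \<noteq> opt th \<Longrightarrow> mu j th < mu (opt th) th"
    using i by auto
qed

lemma A_sub: "A \<subseteq> {1..L}" unfolding opt_set_def using opt_prop by auto
lemma A_fin: "finite A" using finite_subset[OF A_sub] by simp
lemma astar_A: "astar \<in> A" unfolding opt_set_def using tho by auto
lemma A_ne: "A \<noteq> {}" using astar_A by auto

lemma gap_nonneg: "i \<in> {1..L} \<Longrightarrow> gp i \<ge> 0"
  unfolding gap_def using opt_prop(2)[OF tho, of i] by (cases "i = astar") auto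
lemma gap_nonnegA: "i \<in> A \<Longrightarrow> gp i \<ge> 0" using gap_nonneg A_sub by auto
lemma gap_astar: "gp astar = 0" by (simp add: gap_def)

definition hist where "hist X k = fp_hist L mu Th X k"
definition sel where
  "sel X k = (let Ak = conf_set L mu Th X (Suc k) (hist X k) in if Ak \<noteq> {} then Ak else A)"

lemma conf_sub: "conf_set L mu Th X k h \<subseteq> A" unfolding conf_set_def opt_set_def by auto
lemma sel_sub: "sel X k \<subseteq> A" using conf_sub by (simp add: sel_def Let_def)
lemma sel_fin: "finite (sel X k)" using finite_subset[OF sel_sub A_fin] .
lemma sel_ne: "sel X k \<noteq> {}" using A_ne by (simp add: sel_def Let_def)

lemma hist_0: "hist X 0 = sorted_list_of_set A" by (simp add: hist_def)
lemma hist_Suc: "hist X (Suc k) = hist X k @ sorted_list_of_set (sel X k)"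
  by (simp add: hist_def sel_def Let_def)

lemma pulls_Suc: "pulls i (hist X (Suc k)) = pulls i (hist X k) + (if i \<in> sel X k then 1 else 0)"
  using sel_fin by (simp add: hist_Suc pulls_append pulls_sorted)
lemma pulls_0: "pulls i (hist X 0) = (if i \<in> A then 1 else 0)"
  using A_fin by (simp add: hist_0 pulls_sorted)
lemma pulls_le: "pulls i (hist X k) \<le> Suc k" by (induction k) (auto simp: pulls_Suc pulls_0)
lemma pulls_ge: "i \<in> A \<Longrightarrow> pulls i (hist X k) \<ge> 1" by (induction k) (auto simp: pulls_Suc pulls_0)
lemma set_hist: "set (hist X k) \<subseteq> A"
  by (induction k) (use A_fin sel_fin sel_sub in \<open>auto simp: hist_0 hist_Suc\<close>)
lemma len_hist: "length (hist X k) \<ge> Suc k"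
proof (induction k)
  case 0 then show ?case using A_fin A_ne by (simp add: hist_0 card_gt_0_iff Suc_le_eq)
next
  case (Suc k)
  have "card (sel X k) > 0" using sel_fin sel_ne card_gt_0_iff by blast
  then show ?case using Suc by (simp add: hist_Suc)
qed

definition W where "W = (\<Sum>i\<in>A. gp i)"
lemma W_nonneg: "W \<ge> 0" unfolding W_def by (intro sum_nonneg gap_nonnegA)

lemma G_hist: "sum_list (map gp (hist X k)) = W + (\<Sum>j<k. \<Sum>i\<in>sel X j. gp i)"
  by (induction k) (use A_fin sel_fin in \<open>simp_all add: W_def hist_0 hist_Suc sum_list_distinct_conv_sum_set\<close>)

lemma regret_le:
  assumes "1 \<le> T"
  shows "fp_regret L mu Th tho X T \<le> sum_list (map gp (hist X (T - 1)))"
proof -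
  define xs where "xs = hist X (T - 1)"
  have T: "T = Suc (T - 1)" using assms by simp
  have lx: "length xs \<ge> T" using len_hist[where X=X and k="T-1"] assms unfolding xs_def by simp
  have nth: "fp_action L mu Th X T t = xs ! (t - 1)" if "t \<in> {1..T}" for t
  proof -
    have "hist X T = xs @ sorted_list_of_set (sel X (T-1))" unfolding xs_def
      by (subst T) (simp add: hist_Suc)
    moreover have "t - 1 < length xs" using that lx by auto
    ultimately show ?thesis unfolding fp_action_def hist_def[symmetric]
      by (simp add: nth_append)
  qed
  have "fp_regret L mu Th tho X T = (\<Sum>t=1..T. gp (xs ! (t - 1)))"
    unfolding fp_regret_def gap_def using nth by simp
  also have "\<dots> = (\<Sum>t<T. gp (xs ! t))"
    by (rule sum.reindex_bij_witness[where i="\<lambda>t. Suc t" and j="\<lambda>t. t - 1"]) auto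
  also have "\<dots> \<le> (\<Sum>t<length xs. gp (xs ! t))"
  proof (rule sum_mono2)
    show "{..<T} \<subseteq> {..<length xs}" using lx by auto
    fix t assume "t \<in> {..<length xs} - {..<T}"
    then have "xs ! t \<in> A" using set_hist[where X=X and k="T-1"] unfolding xs_def by (auto simp: nth_mem subset_iff)
    then show "0 \<le> gp (xs ! t)" by (rule gap_nonnegA)
  qed simp
  also have "\<dots> = sum_list (map gp xs)" by (simp add: sum_list_sum_nth atLeast0LessThan)
  finally show ?thesis unfolding xs_def .
qed

end


context fpb begin

abbreviation "Bs \<equiv> B_set L mu Th tho"
abbreviation "Cs \<equiv> C_set L mu Th tho"
abbreviation "bt \<equiv> beta L mu Th tho"

definition rad where "rad X k i = sqrt (3 * ln (real (Suc k)) / real (pulls i (hist X k)))"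
definition good where "good X k \<longleftrightarrow> (\<forall>i\<in>A. \<bar>emp_mean X i (hist X k) - mu i tho\<bar> \<le> rad X k i)"

lemma conf_char: "conf_set L mu Th X (Suc k) (hist X k) =
   opt ` {th\<in>Th. \<forall>i\<in>A. \<bar>emp_mean X i (hist X k) - mu i th\<bar> \<le> rad X k i}"
  unfolding conf_set_def rad_def by simp

lemma good_sel: "good X k \<Longrightarrow> sel X k = opt ` {th\<in>Th. \<forall>i\<in>A. \<bar>emp_mean X i (hist X k) - mu i th\<bar> \<le> rad X k i}"
proof -
  assume g: "good X k"
  have "tho \<in> {th\<in>Th. \<forall>i\<in>A. \<bar>emp_mean X i (hist X k) - mu i th\<bar> \<le> rad X k i}"
    using g tho unfolding good_def by auto
  then have "conf_set L mu Th X (Suc k) (hist X k) \<noteq> {}" unfolding conf_char by blast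
  then show ?thesis unfolding sel_def Let_def conf_char by simp
qed

lemma good_astar: "good X k \<Longrightarrow> astar \<in> sel X k"
proof -
  assume g: "good X k"
  have "tho \<in> {th\<in>Th. \<forall>i\<in>A. \<bar>emp_mean X i (hist X k) - mu i th\<bar> \<le> rad X k i}"
    using g tho unfolding good_def by auto
  then show ?thesis unfolding good_sel[OF g] by blast
qed

definition dset where "dset = (\<lambda>th. \<bar>mu astar th - mu astar tho\<bar>) ` {th\<in>Th. opt th \<noteq> astar \<and> th \<notin> Bs}"
definition del where "del = Min (insert 1 dset)"

lemma dset_fin: "finite dset" unfolding dset_def using finTh by simp

lemma del_pos: "del > 0"
  unfolding del_def
proof (subst Min_gr_iff)
  show "finite (insert 1 dset)" using dset_fin by simp
  show "\<forall>a\<in>insert 1 dset. 0 < a"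
  proof
    fix a assume "a \<in> insert 1 dset"
    then show "0 < a"
    proof
      assume "a \<in> dset"
      then obtain th where th: "th \<in> Th" "opt th \<noteq> astar" "th \<notin> Bs" "a = \<bar>mu astar th - mu astar tho\<bar>"
        unfolding dset_def by auto
      then have "mu astar tho \<noteq> mu astar th" unfolding B_set_def by auto
      then show ?thesis using th by auto
    qed simp
  qed
qed simp

lemma del_le: "th \<in> Th \<Longrightarrow> opt th \<noteq> astar \<Longrightarrow> th \<notin> Bs \<Longrightarrow> del \<le> \<bar>mu astar th - mu astar tho\<bar>"
  unfolding del_def using dset_fin by (intro Min_le) (auto simp: dset_def)

lemma Cs_sub: "Cs \<subseteq> A" unfolding C_set_def opt_set_def B_set_def by auto
lemma Cs_fin: "finite Cs" using finite_subset[OF Cs_sub A_fin] .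

lemma beta_prop:
  assumes th: "th \<in> Bs"
  shows "0 < bt (opt th)" "bt (opt th) \<le> \<bar>mu (opt th) tho - mu (opt th) th\<bar>"
proof -
  define i where "i = opt th"
  define S where "S = {th'\<in>Bs. opt th' = i}"
  have Sfin: "finite S" unfolding S_def B_set_def using finTh by simp
  have thS: "th \<in> S" unfolding S_def i_def using th by simp
  have bt: "bt i = Min ((\<lambda>th'. \<bar>mu i tho - mu i th'\<bar>) ` S)" unfolding beta_def S_def by simp
  show "bt (opt th) \<le> \<bar>mu (opt th) tho - mu (opt th) th\<bar>"
    unfolding i_def[symmetric] bt using Sfin thS by (intro Min_le) auto
  have "0 < Min ((\<lambda>th'. \<bar>mu i tho - mu i th'\<bar>) ` S)"
  proof (subst Min_gr_iff)
    show "finite ((\<lambda>th'. \<bar>mu i tho - mu i th'\<bar>) ` S)" using Sfin by simp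
    show "(\<lambda>th'. \<bar>mu i tho - mu i th'\<bar>) ` S \<noteq> {}" using thS by auto
    show "\<forall>a\<in>(\<lambda>th'. \<bar>mu i tho - mu i th'\<bar>) ` S. 0 < a"
    proof
      fix a assume "a \<in> (\<lambda>th'. \<bar>mu i tho - mu i th'\<bar>) ` S"
      then obtain th' where th': "th' \<in> Th" "opt th' = i" "i \<noteq> astar"
          "mu astar tho = mu astar th'" "a = \<bar>mu i tho - mu i th'\<bar>"
        unfolding S_def B_set_def by auto
      have "mu astar th' < mu i th'" using opt_prop(2)[OF th'(1), of astar] opt_prop(1)[OF tho] th' by auto
      moreover have "mu i tho < mu astar tho" using opt_prop(2)[OF tho, of i] opt_prop(1)[OF th'(1)] th' by auto
      ultimately show "0 < a" using th' by auto
    qed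
  qed
  then show "0 < bt (opt th)" unfolding i_def[symmetric] bt .
qed

lemma episode:
  "(\<Sum>i\<in>sel X k. gp i) \<le> W * (if good X k then 0 else 1)
     + W * (if good X k \<and> real (pulls astar (hist X k)) \<le> 12 * ln (real (Suc k)) / del^2 then 1 else 0)
     + (\<Sum>i\<in>Cs. gp i * (if i \<in> sel X k \<and> real (pulls i (hist X k)) \<le> 12 * ln (real (Suc k)) / (bt i)^2 then 1 else 0))"
    (is "?L \<le> ?T1 + ?T2 + ?T3")
proof -
  have T3: "0 \<le> ?T3" using Cs_sub by (intro sum_nonneg) (auto intro!: mult_nonneg_nonneg gap_nonnegA)
  have selW: "?L \<le> W" unfolding W_def
    by (rule sum_mono2[OF A_fin sel_sub]) (auto intro: gap_nonnegA)
  have T1: "0 \<le> ?T1" "0 \<le> ?T2" using W_nonneg by auto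
  show ?thesis
  proof (cases "good X k \<and> \<not> real (pulls astar (hist X k)) \<le> 12 * ln (real (Suc k)) / del^2")
    case False
    then have "W \<le> ?T1 + ?T2" using W_nonneg by auto
    then show ?thesis using selW T3 by linarith
  next
    case True
    then have g: "good X k" and nN: "\<not> real (pulls astar (hist X k)) \<le> 12 * ln (real (Suc k)) / del^2" by auto
    have lnn: "0 \<le> ln (real (Suc k))" by simp
    have key: "i \<in> Cs \<and> real (pulls i (hist X k)) \<le> 12 * ln (real (Suc k)) / (bt i)^2"
      if i: "i \<in> sel X k" "i \<noteq> astar" for i
    proof -
      obtain th where th: "th\<in>Th" "\<forall>j\<in>A. \<bar>emp_mean X j (hist X k) - mu j th\<bar> \<le> rad X k j" "i = opt th"
        using i(1) unfolding good_sel[OF g] by auto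
      have close: "\<bar>mu j th - mu j tho\<bar> \<le> 2 * rad X k j" if j: "j \<in> A" for j
      proof -
        have "\<bar>emp_mean X j (hist X k) - mu j tho\<bar> \<le> rad X k j" using g j unfolding good_def by auto
        moreover have "\<bar>emp_mean X j (hist X k) - mu j th\<bar> \<le> rad X k j" using th(2) j by auto
        ultimately show ?thesis by linarith
      qed
      have pos: "0 < real (pulls j (hist X k))" if "j \<in> A" for j using pulls_ge[OF that, of X k] by simp
      have thB: "th \<in> Bs"
      proof (rule ccontr)
        assume nb: "th \<notin> Bs"
        have "real (pulls astar (hist X k)) \<le> 12 * ln (real (Suc k)) / del^2"
          by (rule nbound[OF del_pos del_le[OF th(1) _ nb] close[OF astar_A, unfolded rad_def] pos[OF astar_A] lnn])
             (use th i in auto)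
        then show False using nN by simp
      qed
      have iC: "i \<in> Cs" unfolding C_set_def using thB th(3) by simp
      have iA: "i \<in> A" using i(1) sel_sub by auto
      have "real (pulls i (hist X k)) \<le> 12 * ln (real (Suc k)) / (bt i)^2"
        using nbound[OF beta_prop(1)[OF thB] _ close[OF iA, unfolded rad_def] pos[OF iA] lnn] beta_prop(2)[OF thB] th(3)
        by (simp add: abs_minus_commute)
      then show ?thesis using iC by simp
    qed
    have "?L = (\<Sum>i\<in>sel X k - {astar}. gp i)"
      using sel_fin by (simp add: sum_diff1 gap_astar)
    also have "\<dots> \<le> (\<Sum>i\<in>{i\<in>Cs. i \<in> sel X k \<and> real (pulls i (hist X k)) \<le> 12 * ln (real (Suc k)) / (bt i)^2}. gp i)"
      by (rule sum_mono2) (use Cs_fin key Cs_sub in \<open>auto intro: gap_nonnegA\<close>)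
    also have "\<dots> = ?T3" using Cs_fin by (simp add: sum.inter_filter if_distrib cong: if_cong)
    finally have "?L \<le> ?T3" .
    moreover have "?T1 = 0" "?T2 = 0" using g nN by auto
    ultimately show ?thesis by linarith
  qed
qed

definition Bad where "Bad X N = (\<Sum>k<N. if good X k then 0 else (1::real))"
definition cc where "cc = 12 / del^2"
definition C1 where "C1 = 2 * cc * \<bar>ln (2 * cc)\<bar>"

lemma cc_pos: "cc > 0" unfolding cc_def using del_pos by simp
lemma C1_nonneg: "C1 \<ge> 0" unfolding C1_def using cc_pos by simp

lemma good_count: "real (pulls astar (hist X k)) \<ge> 1 + (\<Sum>j<k. if good X j then 1 else 0)"
proof (induction k)
  case 0 then show ?case using astar_A by (simp add: pulls_0)
next
  case (Suc k)
  then show ?case using good_astar[of X k] by (auto simp: pulls_Suc)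
qed

lemma good_bad: "(\<Sum>j<k. if good X j then 1 else 0) + (\<Sum>j<k. if good X j then 0 else 1) = (real k)"
  by (induction k) auto

lemma Bad_nonneg: "Bad X N \<ge> 0" unfolding Bad_def by (intro sum_nonneg) auto

lemma N_count:
  "(\<Sum>k<N. if good X k \<and> real (pulls astar (hist X k)) \<le> 12 * ln (real (Suc k)) / del^2 then 1 else 0)
     \<le> 2 * Bad X N + C1"
proof -
  have "(\<Sum>k<N. if good X k \<and> real (pulls astar (hist X k)) \<le> 12 * ln (real (Suc k)) / del^2 then 1 else 0)
      \<le> (\<Sum>k<N. if real (Suc k) \<le> 2 * Bad X N + C1 then 1 else (0::real))"
  proof (rule sum_mono)
    fix k assume k: "k \<in> {..<N}"
    show "(if good X k \<and> real (pulls astar (hist X k)) \<le> 12 * ln (real (Suc k)) / del^2 then 1 else 0)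
      \<le> (if real (Suc k) \<le> 2 * Bad X N + C1 then 1 else (0::real))"
    proof (cases "good X k \<and> real (pulls astar (hist X k)) \<le> 12 * ln (real (Suc k)) / del^2")
      case True
      have b1: "(\<Sum>j<k. if good X j then 0 else (1::real)) \<le> Bad X N"
        unfolding Bad_def using k by (intro sum_mono2) auto
      have "real (Suc k) - Bad X N \<le> real (pulls astar (hist X k))"
        using good_count[of X k] good_bad[of X k] b1 by simp
      also have "\<dots> \<le> cc * ln (real (Suc k))" using True unfolding cc_def by simp
      also have "\<dots> \<le> real (Suc k) / 2 + cc * ln (2 * cc)" by (rule ln_lin[OF cc_pos]) simp
      also have "\<dots> \<le> real (Suc k) / 2 + C1 / 2" unfolding C1_def using cc_pos by simp
      finally have h: "real (Suc k) - Bad X N \<le> real (Suc k) / 2 + C1 / 2" .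
      then have "real (Suc k) \<le> 2 * Bad X N + C1" using h by (simp add: field_simps)
      then show ?thesis using True by simp
    qed auto
  qed
  also have "\<dots> \<le> 2 * Bad X N + C1" by (rule count_le2) (use Bad_nonneg C1_nonneg in simp)
  finally show ?thesis .
qed

lemma B_count:
  assumes iC: "i \<in> Cs" and T: "N < T"
  shows "(\<Sum>k<N. if i \<in> sel X k \<and> real (pulls i (hist X k)) \<le> 12 * ln (real (Suc k)) / (bt i)^2 then 1 else 0)
     \<le> 12 * ln (real T) / (bt i)^2"
proof -
  obtain th where th: "th \<in> Bs" "i = opt th" using iC unfolding C_set_def by auto
  have bp: "0 < bt i" using beta_prop(1)[OF th(1)] th(2) by simp
  have "(\<Sum>k<N. if i \<in> sel X k \<and> real (pulls i (hist X k)) \<le> 12 * ln (real (Suc k)) / (bt i)^2 then 1 else 0)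
     \<le> (\<Sum>k<N. if i \<in> sel X k \<and> real (pulls i (hist X k)) \<le> 12 * ln (real T) / (bt i)^2 then 1 else (0::real))"
  proof (rule sum_mono)
    fix k assume k: "k \<in> {..<N}"
    have "ln (real (Suc k)) \<le> ln (real T)" using k T by simp
    then have "12 * ln (real (Suc k)) / (bt i)^2 \<le> 12 * ln (real T) / (bt i)^2"
      using bp by (intro divide_right_mono) auto
    then show "(if i \<in> sel X k \<and> real (pulls i (hist X k)) \<le> 12 * ln (real (Suc k)) / (bt i)^2 then 1 else 0)
     \<le> (if i \<in> sel X k \<and> real (pulls i (hist X k)) \<le> 12 * ln (real T) / (bt i)^2 then 1 else (0::real))"
      by auto
  qed
  also have "\<dots> \<le> 12 * ln (real T) / (bt i)^2"
  proof (rule count_le[where n="\<lambda>k. pulls i (hist X k)"])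
    show "\<And>k. pulls i (hist X (Suc k)) = pulls i (hist X k) + (if i \<in> sel X k then 1 else 0)"
      by (rule pulls_Suc)
    show "1 \<le> pulls i (hist X 0)" using iC Cs_sub by (auto simp: pulls_0)
    show "0 \<le> 12 * ln (real T) / (bt i)^2" using T by simp
  qed
  finally show ?thesis .
qed

definition FF where
  "FF X k i n \<longleftrightarrow> real n * sqrt (3 * ln (real (Suc k)) / real n) \<le> \<bar>(\<Sum>\<tau>\<in>{1..n}. X (i,\<tau>)) - real n * mu i tho\<bar>"

lemma bad_FF: "(if good X k then 0 else 1) \<le> (\<Sum>i\<in>A. \<Sum>n\<in>{1..Suc k}. if FF X k i n then 1 else (0::real))"
proof (cases "good X k")
  case True
  have "0 \<le> (\<Sum>i\<in>A. \<Sum>n\<in>{1..Suc k}. if FF X k i n then 1 else (0::real))"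
    by (intro sum_nonneg) auto
  then show ?thesis using True by simp
next
  case False
  then obtain i where i: "i \<in> A" "\<bar>emp_mean X i (hist X k) - mu i tho\<bar> > rad X k i"
    unfolding good_def by auto
  define n where "n = pulls i (hist X k)"
  have n: "n \<in> {1..Suc k}" unfolding n_def using pulls_ge[OF i(1)] pulls_le by auto
  have npos: "real n > 0" using n by simp
  have "real n * sqrt (3 * ln (real (Suc k)) / real n) < real n * \<bar>(\<Sum>\<tau>\<in>{1..n}. X (i,\<tau>)) / real n - mu i tho\<bar>"
    using i(2) npos unfolding rad_def emp_mean_def n_def[symmetric] by simp
  also have "\<dots> = \<bar>(\<Sum>\<tau>\<in>{1..n}. X (i,\<tau>)) - real n * mu i tho\<bar>"
    using npos by (simp add: abs_mult[symmetric] field_simps)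
  finally have F: "FF X k i n" unfolding FF_def by simp
  have "1 \<le> (\<Sum>n\<in>{1..Suc k}. if FF X k i n then 1 else (0::real))"
    using member_le_sum[OF n, of "\<lambda>n. if FF X k i n then 1 else (0::real)"] F by auto
  also have "\<dots> \<le> (\<Sum>i\<in>A. \<Sum>n\<in>{1..Suc k}. if FF X k i n then 1 else (0::real))"
    apply (rule member_le_sum[OF i(1)])
     apply (rule sum_nonneg)
     apply simp
    apply (rule A_fin)
    done
  finally show ?thesis using False by simp
qed

lemma det_bound:
  assumes T: "1 \<le> T"
  shows "fp_regret L mu Th tho X T \<le> W * (1 + C1)
     + 3 * W * (\<Sum>k<T-1. \<Sum>i\<in>A. \<Sum>n\<in>{1..Suc k}. if FF X k i n then 1 else (0::real))
     + 12 * ln (real T) * (\<Sum>i\<in>Cs. gp i / (bt i)^2)"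
proof -
  define N where "N = T - 1"
  have NT: "N < T" using T unfolding N_def by simp
  define I1 where "I1 k = (if good X k then 0 else (1::real))" for k
  define I2 where "I2 k = (if good X k \<and> real (pulls astar (hist X k)) \<le> 12 * ln (real (Suc k)) / del^2 then 1 else (0::real))" for k
  define I3 where "I3 i k = (if i \<in> sel X k \<and> real (pulls i (hist X k)) \<le> 12 * ln (real (Suc k)) / (bt i)^2 then 1 else (0::real))" for i k
  have "fp_regret L mu Th tho X T \<le> W + (\<Sum>k<N. \<Sum>i\<in>sel X k. gp i)"
    using regret_le[OF T, of X] G_hist[of X N] unfolding N_def by simp
  also have "\<dots> \<le> W + (\<Sum>k<N. W * I1 k + W * I2 k + (\<Sum>i\<in>Cs. gp i * I3 i k))"
    unfolding I1_def I2_def I3_def by (intro add_left_mono sum_mono episode)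
  also have "\<dots> = W + W * (\<Sum>k<N. I1 k) + W * (\<Sum>k<N. I2 k) + (\<Sum>i\<in>Cs. gp i * (\<Sum>k<N. I3 i k))"
    by (simp add: sum.distrib sum_distrib_left sum.swap[of _ Cs])
  also have "\<dots> \<le> W + W * (\<Sum>k<N. I1 k) + W * (2 * (\<Sum>k<N. I1 k) + C1) + (\<Sum>i\<in>Cs. gp i * (12 * ln (real T) / (bt i)^2))"
  proof -
    have "W * (\<Sum>k<N. I2 k) \<le> W * (2 * (\<Sum>k<N. I1 k) + C1)"
      using N_count[where N=N and X=X] W_nonneg unfolding I1_def I2_def Bad_def by (intro mult_left_mono) auto
    moreover have "(\<Sum>i\<in>Cs. gp i * (\<Sum>k<N. I3 i k)) \<le> (\<Sum>i\<in>Cs. gp i * (12 * ln (real T) / (bt i)^2))"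
      using B_count[OF _ NT] Cs_sub unfolding I3_def
      by (intro sum_mono mult_left_mono) (auto intro: gap_nonnegA)
    ultimately show ?thesis by linarith
  qed
  also have "\<dots> = W * (1 + C1) + 3 * W * (\<Sum>k<N. I1 k) + 12 * ln (real T) * (\<Sum>i\<in>Cs. gp i / (bt i)^2)"
  proof -
    have e: "(\<Sum>i\<in>Cs. gp i * (12 * ln (real T) / (bt i)^2)) = 12 * ln (real T) * (\<Sum>i\<in>Cs. gp i / (bt i)^2)"
      by (subst sum_distrib_left) (rule sum.cong, auto)
    show ?thesis unfolding e by (simp add: algebra_simps)
  qed
  also have "\<dots> \<le> W * (1 + C1) + 3 * W * (\<Sum>k<N. \<Sum>i\<in>A. \<Sum>n\<in>{1..Suc k}. if FF X k i n then 1 else (0::real))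
     + 12 * ln (real T) * (\<Sum>i\<in>Cs. gp i / (bt i)^2)"
    using W_nonneg bad_FF unfolding I1_def by (intro add_mono mult_left_mono sum_mono order_refl) auto
  finally show ?thesis unfolding N_def .
qed

end



lemma hoeff_single:
  fixes Mf :: "nat \<times> nat \<Rightarrow> real measure" and I :: "(nat\<times>nat) set"
  assumes pps: "product_prob_space Mf"
    and sets: "\<And>j. sets (Mf j) = sets borel"
    and ae: "\<And>j. j \<in> I \<Longrightarrow> AE x in Mf j. 0 \<le> x \<and> x \<le> 1"
    and mean: "\<And>\<tau>. (i,\<tau>) \<in> I \<Longrightarrow> (\<integral>x. x \<partial>Mf (i,\<tau>)) = m"
    and sub: "{i}\<times>{1..n} \<subseteq> I" and n: "n \<ge> 1" and eps: "\<epsilon> \<ge> 0"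
  shows "measure (PiM I Mf) {x\<in>space (PiM I Mf). \<epsilon> \<le> \<bar>(\<Sum>\<tau>\<in>{1..n}. x (i,\<tau>)) - n*m\<bar>}
          \<le> 2*exp(-2*\<epsilon>\<^sup>2/n)"
proof -
  interpret product_prob_space Mf I by (rule pps)
  have meas[measurable]: "\<And>\<tau>. (i,\<tau>) \<in> I \<Longrightarrow> (\<lambda>x. x (i,\<tau>)) \<in> borel_measurable (PiM I Mf)"
    by (metis measurable_cong_sets measurable_component_singleton sets)
  have ss: "sigma_sets UNIV (sets borel) = (sets borel :: real set set)"
    using sets.sigma_sets_eq[of borel] by simp
  have iI': "\<And>\<tau>. \<tau> \<in> {1..n} \<Longrightarrow> (i,\<tau>) \<in> I" using sub by auto
  have indep: "P.indep_vars (\<lambda>_. borel) (\<lambda>\<tau> x. x (i,\<tau>)) {1..n}"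
  proof (subst P.indep_vars_finite[where E="\<lambda>_. sets borel"])
    show "{1..n} \<noteq> {}" using n by auto
    show "\<forall>A\<in>{1..n} \<rightarrow> sets borel.
        P.prob (\<Inter>j\<in>{1..n}. (\<lambda>x. x (i, j)) -` A j \<inter> space (Pi\<^sub>M I Mf)) =
        (\<Prod>j\<in>{1..n}. P.prob ((\<lambda>x. x (i, j)) -` A j \<inter> space (Pi\<^sub>M I Mf)))"
    proof
      fix A :: "nat \<Rightarrow> real set" assume A: "A \<in> {1..n} \<rightarrow> sets borel"
      have e1: "(\<Inter>j\<in>{1..n}. (\<lambda>x. x (i, j)) -` A j \<inter> space (Pi\<^sub>M I Mf)) =
          {x\<in>space (Pi\<^sub>M I Mf). \<forall>j\<in>{i}\<times>{1..n}. x j \<in> A (snd j)}" using n by auto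
      have "emeasure (Pi\<^sub>M I Mf) {x\<in>space (Pi\<^sub>M I Mf). \<forall>j\<in>{i}\<times>{1..n}. x j \<in> A (snd j)}
           = (\<Prod>j\<in>{i}\<times>{1..n}. emeasure (Mf j) (A (snd j)))"
        using sub A sets by (intro emeasure_PiM_Collect) auto
      also have "\<dots> = (\<Prod>j\<in>{1..n}. emeasure (Mf (i,j)) (A j))"
        by (rule prod.reindex_bij_witness[where i="\<lambda>j. (i,j)" and j="snd"]) auto
      also have "\<dots> = (\<Prod>j\<in>{1..n}. emeasure (Pi\<^sub>M I Mf) ((\<lambda>x. x (i, j)) -` A j \<inter> space (Pi\<^sub>M I Mf)))"
      proof (rule prod.cong[OF refl])
        fix j assume j: "j \<in> {1..n}"
        have eqj: "(\<lambda>x. x (i, j)) -` A j \<inter> space (Pi\<^sub>M I Mf) = {x\<in>space (Pi\<^sub>M I Mf). x (i,j) \<in> A j}" by auto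
        show "emeasure (Mf (i,j)) (A j) = emeasure (Pi\<^sub>M I Mf) ((\<lambda>x. x (i, j)) -` A j \<inter> space (Pi\<^sub>M I Mf))"
        proof -
          have ij: "(i,j) \<in> I" using j sub by auto
          have Aj: "A j \<in> sets (Mf (i,j))" using A j sets by auto
          show ?thesis using emeasure_PiM_Collect_single[OF ij Aj] eqj by simp
        qed
      qed
      finally show "P.prob (\<Inter>j\<in>{1..n}. (\<lambda>x. x (i, j)) -` A j \<inter> space (Pi\<^sub>M I Mf)) =
        (\<Prod>j\<in>{1..n}. P.prob ((\<lambda>x. x (i, j)) -` A j \<inter> space (Pi\<^sub>M I Mf)))"
        unfolding e1 P.emeasure_eq_measure
        by (subst (asm) prod_ennreal) (auto simp: prod_nonneg)
    qed
  qed (use sub ss iI' in \<open>auto simp: Int_stable_def intro!: meas\<close>)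
  interpret H: Hoeffding_ineq "PiM I Mf" "{1..n}" "\<lambda>\<tau> x. x (i,\<tau>)" "\<lambda>_. 0" "\<lambda>_. 1"
       "\<Sum>\<tau>\<in>{1..n}. P.expectation (\<lambda>x. x (i,\<tau>))"
  proof unfold_locales
    show "finite {1..n}" by simp
    show "P.indep_vars (\<lambda>_. borel) (\<lambda>\<tau> x. x (i,\<tau>)) {1..n}" by (rule indep)
    fix j assume j: "j \<in> {1..n}"
    then have "(i,j) \<in> I" using sub by auto
    then show "AE x in Pi\<^sub>M I Mf. x (i, j) \<in> {0..1}"
      using AE_component[OF \<open>(i,j)\<in>I\<close> ae[OF \<open>(i,j)\<in>I\<close>]] by auto
  qed simp
  have ex: "P.expectation (\<lambda>x. x (i,\<tau>)) = m" if "\<tau> \<in> {1..n}" for \<tau>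
  proof -
    have iI: "(i,\<tau>) \<in> I" using that sub by auto
    have "P.expectation (\<lambda>x. x (i,\<tau>)) = (\<integral>x. x \<partial>distr (PiM I Mf) (Mf (i,\<tau>)) (\<lambda>x. x (i,\<tau>)))"
      using iI measurable_ident_sets[OF sets[of "(i,\<tau>)"]]
      by (subst integral_distr) (auto intro: measurable_component_singleton)
    also have "\<dots> = m" using PiM_component[OF iI] mean[OF iI] by simp
    finally show ?thesis .
  qed
  have "measure (PiM I Mf) {x\<in>space (PiM I Mf). \<bar>(\<Sum>\<tau>\<in>{1..n}. x (i,\<tau>)) - (\<Sum>\<tau>\<in>{1..n}. P.expectation (\<lambda>x. x (i,\<tau>)))\<bar> \<ge> \<epsilon>}
      \<le> 2 * exp (-2 * \<epsilon>\<^sup>2 / (\<Sum>i\<in>{1..n}. (1 - 0)\<^sup>2))"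
    by (rule H.Hoeffding_ineq_abs_ge[OF eps]) (use n in simp)
  moreover have "(\<Sum>\<tau>\<in>{1..n}. P.expectation (\<lambda>x. x (i,\<tau>))) = n*m" using ex by simp
  ultimately show ?thesis by simp
qed




lemma sum_inv_sq: "(\<Sum>k<N. 1 / (real (Suc k))^2) \<le> 2"
proof -
  have h: "(\<Sum>k<Suc N. 1 / (real (Suc k))^2) \<le> 2 - 1 / real (Suc N)" for N
  proof (induction N)
    case 0 then show ?case by simp
  next
    case (Suc N)
    have e: "1 / real (Suc N) - 1 / real (Suc (Suc N)) = 1 / (real (Suc N) * real (Suc (Suc N)))"
      by (simp add: field_simps)
    have "1 / (real (Suc (Suc N)))^2 \<le> 1 / (real (Suc N) * real (Suc (Suc N)))"
      unfolding power2_eq_square by (rule divide_left_mono) (auto intro!: mult_right_mono)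
    then have "1 / (real (Suc (Suc N)))^2 \<le> 1 / real (Suc N) - 1 / real (Suc (Suc N))"
      unfolding e .
    then show ?case using Suc by simp
  qed
  show ?thesis
  proof (cases N)
    case 0 then show ?thesis by simp
  next
    case (Suc m)
    have "(\<Sum>k<Suc m. 1 / (real (Suc k))^2) \<le> 2 - 1 / real (Suc m)" by (rule h)
    moreover have "0 \<le> 1 / real (Suc m)" by simp
    ultimately show ?thesis unfolding Suc by linarith
  qed
qed

lemma exp_bound:
  fixes k :: nat
  assumes that: "n \<ge> 1"
  shows "exp (- 2 * (real n * sqrt (3 * ln (real (Suc k)) / real n))\<^sup>2 / real n) \<le> 1 / (real (Suc k))^3"
proof -
  define x where "x = real (Suc k)"
  have x1: "x \<ge> 1" unfolding x_def by simp
  have l: "0 \<le> ln x" using x1 by simp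
  have "(real n * sqrt (3 * ln x / real n))\<^sup>2 / real n = 3 * ln x"
    using that l by (simp add: power_mult_distrib power2_eq_square[of "real n"] field_simps)
  then have "exp (- 2 * (real n * sqrt (3 * ln x / real n))\<^sup>2 / real n) = exp (- (6 * ln x))"
    by simp
  also have "\<dots> = 1 / exp (real 6 * ln x)" by (simp add: exp_minus field_simps)
  also have "exp (real 6 * ln x) = x^6"
  proof -
    have "ln (x^6) = real 6 * ln x" using x1 by (simp add: ln_realpow)
    moreover have "exp (ln (x^6)) = x^6" using x1 by simp
    ultimately show ?thesis by simp
  qed
  also have "1 / x^6 \<le> 1 / x^3" using x1 by (intro divide_left_mono power_increasing) auto
  finally show ?thesis unfolding x_def .
qed

lemma aux: "x > 0 \<Longrightarrow> (x::real) * (2 / x^3) = 2 * (1 / x^2)"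
  by (simp add: power3_eq_cube power2_eq_square field_simps)

context fpb begin

definition Dc where "Dc = W * (1 + C1) + 3 * W * (4 * real (card A))"

lemma Dc_nonneg: "Dc \<ge> 0" unfolding Dc_def using W_nonneg C1_nonneg by simp

lemma main:
  assumes hyp: "\<forall>i\<in>{1..L}. \<forall>th\<in>Th. prob_space (P i th) \<and> sets (P i th) = sets borel \<and>
         (AE x in P i th. 0 \<le> x \<and> x \<le> 1) \<and> mu i th = (\<integral>x. x \<partial>P i th)"
    and T: "card A \<le> T"
  shows "(\<integral>X. fp_regret L mu Th tho X T \<partial>bandit_space L P tho)
           \<le> Dc + 12 * ln (real T) * (\<Sum>i\<in>Cs. gp i / (bt i)^2)"
proof -
  define Mf where "Mf = (\<lambda>ia::nat\<times>nat. if fst ia \<in> {1..L} then P (fst ia) tho else return borel 0)"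
  define I where "I = {1..L} \<times> {1::nat..}"
  define M where "M = bandit_space L P tho"
  have M: "M = PiM I Mf" unfolding M_def bandit_space_def I_def Mf_def by (rule PiM_cong) auto
  have pp: "prob_space (Mf ia)" for ia using hyp tho by (auto simp: Mf_def intro: prob_space_return)
  have pps: "product_prob_space Mf"
    unfolding product_prob_space_def product_prob_space_axioms_def product_sigma_finite_def
    using pp prob_space_imp_sigma_finite by auto
  have sets: "sets (Mf j) = sets borel" for j using hyp tho by (auto simp: Mf_def)
  have ae: "AE x in Mf j. 0\<le>x \<and> x\<le>1" if "j \<in> I" for j
  proof -
    have f: "fst j \<in> {1..L}" using that unfolding I_def by auto
    then have mfj: "Mf j = P (fst j) tho" by (simp add: Mf_def)
    have aej: "AE x in P (fst j) tho. 0\<le>x \<and> x\<le>1" using hyp tho f by blast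
    show ?thesis unfolding mfj by (rule aej)
  qed
  have mean: "(\<integral>x. x \<partial>Mf (i,\<tau>)) = mu i tho" if "i \<in> {1..L}" for i \<tau> using hyp tho that by (auto simp: Mf_def)
  interpret PM: prob_space M unfolding M by (rule prob_space_PiM) (rule pp)
  have "0 < card A" using A_fin A_ne by (simp add: card_gt_0_iff)
  then have T1: "1 \<le> T" using T by linarith
  have comp: "(\<lambda>x. x j) \<in> borel_measurable M" if "j \<in> I" for j
  proof -
    have "(\<lambda>x. x j) \<in> measurable (PiM I Mf) (Mf j)" by (rule measurable_component_singleton[OF that])
    then show ?thesis unfolding M measurable_cong_sets[OF refl sets[of j]] .
  qed
  define Fs where "Fs k i n = {x \<in> space M. FF x k i n}" for k i n
  have Fs_sets: "Fs k i n \<in> sets M" if "i \<in> A" for k i n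
  proof -
    have iI: "(i,\<tau>) \<in> I" if "\<tau> \<in> {1..n}" for \<tau> using that \<open>i\<in>A\<close> A_sub unfolding I_def by auto
    have sm: "(\<lambda>x. \<Sum>\<tau>\<in>{1..n}. x (i,\<tau>)) \<in> borel_measurable M"
      by (rule borel_measurable_sum) (use comp iI in auto)
    show ?thesis unfolding Fs_def FF_def using sm by measurable
  qed
  have Fs_prob: "measure M (Fs k i n) \<le> 2 / (real (Suc k))^3" if "i \<in> A" "n \<in> {1..Suc k}" for k i n
  proof -
    have iL: "i \<in> {1..L}" using that A_sub by auto
    have "measure M (Fs k i n) \<le> 2 * exp (-2 * (real n * sqrt (3 * ln (real (Suc k)) / real n))\<^sup>2 / real n)"
      unfolding M Fs_def FF_def
      by (rule hoeff_single[OF pps sets ae mean]) (use iL that in \<open>auto simp: I_def\<close>)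
    also have "\<dots> \<le> 2 * (1 / (real (Suc k))^3)" using exp_bound[of n k] that by simp
    finally show ?thesis by simp
  qed
  define c2 where "c2 = 12 * ln (real T) * (\<Sum>i\<in>Cs. gp i / (bt i)^2)"
  have c2: "c2 \<ge> 0" unfolding c2_def using T1 Cs_sub
    by (intro mult_nonneg_nonneg sum_nonneg divide_nonneg_nonneg gap_nonnegA) auto
  define g where "g x = W * (1 + C1) + 3 * W * (\<Sum>k<T-1. \<Sum>i\<in>A. \<Sum>n\<in>{1..Suc k}. indicator (Fs k i n) x) + c2" for x :: "nat \<times> nat \<Rightarrow> real"
  have le: "fp_regret L mu Th tho x T \<le> g x" if x: "x \<in> space M" for x
  proof -
    have "(\<Sum>k<T-1. \<Sum>i\<in>A. \<Sum>n\<in>{1..Suc k}. if FF x k i n then 1 else (0::real))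
        = (\<Sum>k<T-1. \<Sum>i\<in>A. \<Sum>n\<in>{1..Suc k}. indicator (Fs k i n) x)"
      using x by (intro sum.cong refl) (auto simp: Fs_def indicator_def)
    then show ?thesis using det_bound[OF T1, of x] unfolding g_def c2_def by simp
  qed
  have intF: "integrable M (indicator (Fs k i n) :: _ \<Rightarrow> real)" if "i \<in> A" for k i n
    using Fs_sets[OF that] by (simp add: integrable_indicator_iff Fs_def less_top[symmetric])
  have intS: "integrable M (\<lambda>x. \<Sum>k<T-1. \<Sum>i\<in>A. \<Sum>n\<in>{1..Suc k}. indicator (Fs k i n) x :: real)"
    apply (rule Bochner_Integration.integrable_sum)+
    apply (rule intF)
    apply simp
    done
  have intg: "integrable M g" unfolding g_def using intS by auto
  have "integral\<^sup>L M (\<lambda>x. \<Sum>k<T-1. \<Sum>i\<in>A. \<Sum>n\<in>{1..Suc k}. indicator (Fs k i n) x :: real)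
     = (\<Sum>k<T-1. \<Sum>i\<in>A. \<Sum>n\<in>{1..Suc k}. measure M (Fs k i n))"
  proof -
    have "integral\<^sup>L M (\<lambda>x. \<Sum>k<T-1. \<Sum>i\<in>A. \<Sum>n\<in>{1..Suc k}. indicator (Fs k i n) x :: real)
      = (\<Sum>k<T-1. integral\<^sup>L M (\<lambda>x. \<Sum>i\<in>A. \<Sum>n\<in>{1..Suc k}. indicator (Fs k i n) x :: real))"
      using intF by (intro Bochner_Integration.integral_sum Bochner_Integration.integrable_sum) auto
    also have "\<dots> = (\<Sum>k<T-1. \<Sum>i\<in>A. integral\<^sup>L M (\<lambda>x. \<Sum>n\<in>{1..Suc k}. indicator (Fs k i n) x :: real))"
      using intF by (intro sum.cong refl Bochner_Integration.integral_sum Bochner_Integration.integrable_sum) auto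
    also have "\<dots> = (\<Sum>k<T-1. \<Sum>i\<in>A. \<Sum>n\<in>{1..Suc k}. integral\<^sup>L M (indicator (Fs k i n) :: _ \<Rightarrow> real))"
      using intF by (intro sum.cong refl Bochner_Integration.integral_sum) auto
    also have "\<dots> = (\<Sum>k<T-1. \<Sum>i\<in>A. \<Sum>n\<in>{1..Suc k}. measure M (Fs k i n))"
      by (intro sum.cong refl) (simp add: Fs_def Int_absorb2)
    finally show ?thesis .
  qed
  also have "\<dots> \<le> (\<Sum>k<T-1. \<Sum>i\<in>A. \<Sum>n\<in>{1..Suc k}. 2 / (real (Suc k))^3)"
    using Fs_prob by (intro sum_mono) auto
  also have "\<dots> = (\<Sum>k<T-1. real (card A) * 2 * (1 / (real (Suc k))^2))"
  proof (rule sum.cong[OF refl])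
    fix k
    have "(\<Sum>i\<in>A. \<Sum>n\<in>{1..Suc k}. 2 / (real (Suc k))^3) = real (card A) * (real (Suc k) * (2 / (real (Suc k))^3))"
      by simp
    also have "real (Suc k) * (2 / (real (Suc k))^3) = 2 * (1 / (real (Suc k))^2)" by (rule aux) simp
    finally show "(\<Sum>i\<in>A. \<Sum>n\<in>{1..Suc k}. 2 / (real (Suc k))^3) = real (card A) * 2 * (1 / (real (Suc k))^2)"
      by simp
  qed
  also have "\<dots> = real (card A) * 2 * (\<Sum>k<T-1. 1 / (real (Suc k))^2)"
    by (simp add: sum_distrib_left)
  also have "\<dots> \<le> real (card A) * 2 * 2" by (intro mult_left_mono sum_inv_sq) auto
  finally have expS: "integral\<^sup>L M (\<lambda>x. \<Sum>k<T-1. \<Sum>i\<in>A. \<Sum>n\<in>{1..Suc k}. indicator (Fs k i n) x :: real)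
      \<le> 4 * real (card A)" by simp
  have "integral\<^sup>L M g = W * (1 + C1) + 3 * W * integral\<^sup>L M (\<lambda>x. \<Sum>k<T-1. \<Sum>i\<in>A. \<Sum>n\<in>{1..Suc k}. indicator (Fs k i n) x :: real) + c2"
    (is "_ = _ + 3 * W * ?E + _")
    unfolding g_def using intS by (simp add: PM.prob_space)
  also have "\<dots> \<le> Dc + c2"
  proof -
    have "3 * W * ?E \<le> 3 * W * (4 * real (card A))" by (rule mult_left_mono[OF expS]) (use W_nonneg in simp)
    then show ?thesis unfolding Dc_def by linarith
  qed
  finally have gle: "integral\<^sup>L M g \<le> Dc + c2" .
  show ?thesis
  proof (cases "integrable M (\<lambda>X. fp_regret L mu Th tho X T)")
    case True
    have "(\<integral>X. fp_regret L mu Th tho X T \<partial>M) \<le> integral\<^sup>L M g"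
      by (rule integral_mono[OF True intg le])
    then show ?thesis using gle unfolding M_def c2_def by simp
  next
    case False
    then show ?thesis using Dc_nonneg c2 unfolding M_def c2_def by (simp add: not_integrable_integral_eq)
  qed
qed

end


theorem theorem1:
  fixes L :: nat and Th :: "'p set" and mu :: "nat \<Rightarrow> 'p \<Rightarrow> real" and tho :: 'p
  assumes "1 \<le> L" and "finite Th" and "tho \<in> Th"
    and "\<forall>th\<in>Th. \<exists>i\<in>{1..L}. \<forall>j\<in>{1..L}. j \<noteq> i \<longrightarrow> mu j th < mu i th"
  shows "\<exists>D1 D2 :: real. \<forall>P :: nat \<Rightarrow> 'p \<Rightarrow> real measure.
     (\<forall>i\<in>{1..L}. \<forall>th\<in>Th. prob_space (P i th) \<and> sets (P i th) = sets borel \<and>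
         (AE x in P i th. 0 \<le> x \<and> x \<le> 1) \<and> mu i th = (\<integral>x. x \<partial>P i th)) \<longrightarrow>
     (\<forall>T::nat. card (opt_set L mu Th) \<le> T \<longrightarrow>
        (B_set L mu Th tho = {} \<longrightarrow>
           (\<integral>X. fp_regret L mu Th tho X T \<partial>bandit_space L P tho) \<le> D1) \<and>
        (B_set L mu Th tho \<noteq> {} \<longrightarrow>
           (\<integral>X. fp_regret L mu Th tho X T \<partial>bandit_space L P tho)
             \<le> D2 + 12 * ln (real T) *
                (\<Sum>i\<in>C_set L mu Th tho. gap L mu tho i / (beta L mu Th tho i)\<^sup>2)))"
proof -
  interpret fpb L Th mu tho using assms by unfold_locales
  show ?thesis
  proof (rule exI[of _ Dc], rule exI[of _ Dc], intro allI impI conjI)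
    fix P :: "nat \<Rightarrow> 'p \<Rightarrow> real measure" and T :: nat
    assume hyp: "\<forall>i\<in>{1..L}. \<forall>th\<in>Th. prob_space (P i th) \<and> sets (P i th) = sets borel \<and>
         (AE x in P i th. 0 \<le> x \<and> x \<le> 1) \<and> mu i th = (\<integral>x. x \<partial>P i th)"
      and T: "card (opt_set L mu Th) \<le> T"
    note m = main[OF hyp T]
    show "(\<integral>X. fp_regret L mu Th tho X T \<partial>bandit_space L P tho) \<le> Dc"
      if "B_set L mu Th tho = {}" using that m by (simp add: C_set_def)
    show "(\<integral>X. fp_regret L mu Th tho X T \<partial>bandit_space L P tho)
             \<le> Dc + 12 * ln (real T) *
                (\<Sum>i\<in>C_set L mu Th tho. gap L mu tho i / (beta L mu Th tho i)\<^sup>2)"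
      if "B_set L mu Th tho \<noteq> {}" using m by simp
  qed
qed

end
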